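(* Let $V$ be a commutative valuation domain with quotient field $F$, $K/F$ a finite Galois extension with group $G$, $S$ the integral closure of $V$ in $K$, and $f:G\times G\to S\setminus\{0\}$ a normalized $2$-cocycle. For $\sigma\in G$ let $I_\sigma=\bigcap M$, the intersection over those maximal ideals $M$ of $S$ with $f(\sigma,\sigma^{-1})\notin M$. Then $J_G(A_f)=\sum_{\sigma\in G}I_\sigma x_\sigma$.
   Context: $V$ has arbitrary Krull dimension. A normalized 2-cocycle satisfies $\sigma(f(\tau,\gamma))f(\sigma,\tau\gamma)=f(\sigma,\tau)f(\sigma\tau,\gamma)$, $f(1,\sigma)=f(\sigma,1)=1$; values need not be units. $A_f=\bigoplus_{\sigma\in G}Sx_\sigma$ (free left $S$-module) with $(sx_\sigma)(tx_\tau)=s\,\sigma(t)f(\sigma,\tau)x_{\sigma\tau}$, $G$-graded with components $Sx_\sigma$; $J_G(A_f)$ is its graded Jacobson radical (intersection of graded left ideals maximal among proper graded left ideals). An empty intersection of ideals is $S$. *)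

theory Defs
  imports "HOL-Computational_Algebra.Polynomial"
begin

text \<open>All fields are embedded in an ambient field of type 'k (the field K).
  Subrings/subfields are carrier sets; automorphisms are functions 'k => 'k.\<close>

definition subring :: "'k::field set \<Rightarrow> bool" where
  "subring R \<longleftrightarrow> 0 \<in> R \<and> 1 \<in> R \<and> (\<forall>x\<in>R. \<forall>y\<in>R. x + y \<in> R \<and> x - y \<in> R \<and> x * y \<in> R)"

definition subfield :: "'k::field set \<Rightarrow> bool" where
  "subfield F \<longleftrightarrow> subring F \<and> (\<forall>x\<in>F. x \<noteq> 0 \<longrightarrow> inverse x \<in> F)"

definition valuation_domain_with_qf :: "'k::field set \<Rightarrow> 'k set \<Rightarrow> bool" where
  "valuation_domain_with_qf V F \<longleftrightarrow> subring V \<and> subfield F \<and> V \<subseteq> F \<and>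
     F = {a / b | a b. a \<in> V \<and> b \<in> V \<and> b \<noteq> 0} \<and>
     (\<forall>x\<in>F. x \<noteq> 0 \<longrightarrow> x \<in> V \<or> inverse x \<in> V)"

definition field_aut :: "('k::field \<Rightarrow> 'k) \<Rightarrow> bool" where
  "field_aut \<sigma> \<longleftrightarrow> bij \<sigma> \<and> \<sigma> 1 = 1 \<and> (\<forall>x y. \<sigma> (x + y) = \<sigma> x + \<sigma> y \<and> \<sigma> (x * y) = \<sigma> x * \<sigma> y)"

definition gal :: "'k::field set \<Rightarrow> ('k \<Rightarrow> 'k) set" where
  "gal F = {\<sigma>. field_aut \<sigma> \<and> (\<forall>x\<in>F. \<sigma> x = x)}"

definition finite_ext :: "'k::field set \<Rightarrow> bool" where
  "finite_ext F \<longleftrightarrow> (\<exists>B. finite B \<and> (\<forall>y. \<exists>c. (\<forall>b\<in>B. c b \<in> F) \<and> y = (\<Sum>b\<in>B. c b * b)))"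

definition finite_galois :: "'k::field set \<Rightarrow> bool" where
  "finite_galois F \<longleftrightarrow> subfield F \<and> finite_ext F \<and> {x. \<forall>\<sigma>\<in>gal F. \<sigma> x = x} = F"

definition integral_closure :: "'k::field set \<Rightarrow> 'k set" where
  "integral_closure V = {x. \<exists>p. lead_coeff p = 1 \<and> (\<forall>i. coeff p i \<in> V) \<and> poly p x = 0}"

definition ideal_in :: "'k::field set \<Rightarrow> 'k set \<Rightarrow> bool" where
  "ideal_in S I \<longleftrightarrow> I \<subseteq> S \<and> 0 \<in> I \<and> (\<forall>x\<in>I. \<forall>y\<in>I. x + y \<in> I) \<and> (\<forall>s\<in>S. \<forall>x\<in>I. s * x \<in> I)"

definition maximal_ideal_in :: "'k::field set \<Rightarrow> 'k set \<Rightarrow> bool" where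
  "maximal_ideal_in S M \<longleftrightarrow> ideal_in S M \<and> M \<noteq> S \<and>
     (\<forall>J. ideal_in S J \<and> M \<subseteq> J \<and> J \<noteq> S \<longrightarrow> J = M)"

definition normalized_cocycle ::
  "('k::field \<Rightarrow> 'k) set \<Rightarrow> 'k set \<Rightarrow> (('k \<Rightarrow> 'k) \<Rightarrow> ('k \<Rightarrow> 'k) \<Rightarrow> 'k) \<Rightarrow> bool" where
  "normalized_cocycle G S f \<longleftrightarrow>
     (\<forall>\<sigma>\<in>G. \<forall>\<tau>\<in>G. f \<sigma> \<tau> \<in> S - {0}) \<and>
     (\<forall>\<sigma>\<in>G. \<forall>\<tau>\<in>G. \<forall>\<gamma>\<in>G. \<sigma> (f \<tau> \<gamma>) * f \<sigma> (\<tau> \<circ> \<gamma>) = f \<sigma> \<tau> * f (\<sigma> \<circ> \<tau>) \<gamma>) \<and>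
     (\<forall>\<sigma>\<in>G. f id \<sigma> = 1 \<and> f \<sigma> id = 1)"

definition I_sig :: "'k::field set \<Rightarrow> (('k \<Rightarrow> 'k) \<Rightarrow> ('k \<Rightarrow> 'k) \<Rightarrow> 'k) \<Rightarrow> ('k \<Rightarrow> 'k) \<Rightarrow> 'k set" where
  "I_sig S f \<sigma> = S \<inter> \<Inter>{M. maximal_ideal_in S M \<and> f \<sigma> (inv \<sigma>) \<notin> M}"

text \<open>Crossed product A_f: an element sum_sigma a(sigma) x_sigma is represented by the
  coefficient function a, with a sigma in S for sigma in G and 0 outside G.\<close>
definition cp_carrier :: "('k::field \<Rightarrow> 'k) set \<Rightarrow> 'k set \<Rightarrow> ((('k \<Rightarrow> 'k) \<Rightarrow> 'k) set)" where
  "cp_carrier G S = {a. (\<forall>\<sigma>\<in>G. a \<sigma> \<in> S) \<and> (\<forall>\<sigma>. \<sigma> \<notin> G \<longrightarrow> a \<sigma> = 0)}"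

definition cp_add :: "(('k::field \<Rightarrow> 'k) \<Rightarrow> 'k) \<Rightarrow> (('k \<Rightarrow> 'k) \<Rightarrow> 'k) \<Rightarrow> (('k \<Rightarrow> 'k) \<Rightarrow> 'k)" where
  "cp_add a b = (\<lambda>\<rho>. a \<rho> + b \<rho>)"

definition cp_mult :: "('k::field \<Rightarrow> 'k) set \<Rightarrow> (('k \<Rightarrow> 'k) \<Rightarrow> ('k \<Rightarrow> 'k) \<Rightarrow> 'k) \<Rightarrow>
    (('k \<Rightarrow> 'k) \<Rightarrow> 'k) \<Rightarrow> (('k \<Rightarrow> 'k) \<Rightarrow> 'k) \<Rightarrow> (('k \<Rightarrow> 'k) \<Rightarrow> 'k)" where
  "cp_mult G f a b = (\<lambda>\<rho>. \<Sum>\<sigma>\<in>G. \<Sum>\<tau>\<in>G. if \<sigma> \<circ> \<tau> = \<rho> then a \<sigma> * \<sigma> (b \<tau>) * f \<sigma> \<tau> else 0)"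

definition hcomp :: "(('k::field \<Rightarrow> 'k) \<Rightarrow> 'k) \<Rightarrow> ('k \<Rightarrow> 'k) \<Rightarrow> (('k \<Rightarrow> 'k) \<Rightarrow> 'k)" where
  "hcomp a \<sigma> = (\<lambda>\<tau>. if \<tau> = \<sigma> then a \<sigma> else 0)"

definition graded_left_ideal ::
  "('k::field \<Rightarrow> 'k) set \<Rightarrow> 'k set \<Rightarrow> (('k \<Rightarrow> 'k) \<Rightarrow> ('k \<Rightarrow> 'k) \<Rightarrow> 'k) \<Rightarrow> (('k \<Rightarrow> 'k) \<Rightarrow> 'k) set \<Rightarrow> bool" where
  "graded_left_ideal G S f L \<longleftrightarrow> L \<subseteq> cp_carrier G S \<and> (\<lambda>_. 0) \<in> L \<and>
     (\<forall>a\<in>L. \<forall>b\<in>L. cp_add a b \<in> L \<and> (\<lambda>\<rho>. a \<rho> - b \<rho>) \<in> L) \<and>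
     (\<forall>c\<in>cp_carrier G S. \<forall>a\<in>L. cp_mult G f c a \<in> L) \<and>
     (\<forall>a\<in>L. \<forall>\<sigma>\<in>G. hcomp a \<sigma> \<in> L)"

definition maximal_graded_left_ideal ::
  "('k::field \<Rightarrow> 'k) set \<Rightarrow> 'k set \<Rightarrow> (('k \<Rightarrow> 'k) \<Rightarrow> ('k \<Rightarrow> 'k) \<Rightarrow> 'k) \<Rightarrow> (('k \<Rightarrow> 'k) \<Rightarrow> 'k) set \<Rightarrow> bool" where
  "maximal_graded_left_ideal G S f L \<longleftrightarrow> graded_left_ideal G S f L \<and> L \<noteq> cp_carrier G S \<and>
     (\<forall>L'. graded_left_ideal G S f L' \<and> L \<subseteq> L' \<and> L' \<noteq> cp_carrier G S \<longrightarrow> L' = L)"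

text \<open>Graded Jacobson radical J_G(A_f) (empty intersection = A_f).\<close>
definition graded_jacobson ::
  "('k::field \<Rightarrow> 'k) set \<Rightarrow> 'k set \<Rightarrow> (('k \<Rightarrow> 'k) \<Rightarrow> ('k \<Rightarrow> 'k) \<Rightarrow> 'k) \<Rightarrow> (('k \<Rightarrow> 'k) \<Rightarrow> 'k) set" where
  "graded_jacobson G S f = cp_carrier G S \<inter> \<Inter>{L. maximal_graded_left_ideal G S f L}"

end

theory Submission
  imports Defs "Jordan_Normal_Form.Char_Poly"
begin


lemma subring_sum: "subring V \<Longrightarrow> (\<And>x. x\<in>A \<Longrightarrow> g x \<in> V) \<Longrightarrow> sum g A \<in> V"
  by (induction A rule: infinite_finite_induct) (auto simp: subring_def)

lemma subring_prod: "subring V \<Longrightarrow> (\<And>x. x\<in>A \<Longrightarrow> g x \<in> V) \<Longrightarrow> prod g A \<in> V"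
  by (induction A rule: infinite_finite_induct) (auto simp: subring_def)

lemma subring_uminus: "subring V \<Longrightarrow> x \<in> V \<Longrightarrow> - x \<in> V"
  unfolding subring_def by (metis diff_0)

definition PV :: "'k::field set \<Rightarrow> 'k poly \<Rightarrow> bool" where
  "PV V p \<longleftrightarrow> (\<forall>i. coeff p i \<in> V)"

lemma PV_add: "subring V \<Longrightarrow> PV V p \<Longrightarrow> PV V q \<Longrightarrow> PV V (p + q)"
  by (auto simp: PV_def subring_def)

lemma PV_mult: "subring V \<Longrightarrow> PV V p \<Longrightarrow> PV V q \<Longrightarrow> PV V (p * q)"
  unfolding PV_def coeff_mult by (auto intro!: subring_sum simp: subring_def)

lemma PV_const: "subring V \<Longrightarrow> a \<in> V \<Longrightarrow> PV V [:a:]"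
  by (auto simp: PV_def subring_def coeff_pCons split: nat.split)

lemma PV_X: "subring V \<Longrightarrow> PV V [:0,1:]"
  by (auto simp: PV_def subring_def coeff_pCons split: nat.split)

lemma PV_sum: "subring V \<Longrightarrow> (\<And>x. x\<in>A \<Longrightarrow> PV V (g x)) \<Longrightarrow> PV V (sum g A)"
  by (induction A rule: infinite_finite_induct) (auto intro: PV_add PV_const[of V 0, simplified] simp: subring_def)

lemma PV_prod: "subring V \<Longrightarrow> (\<And>x. x\<in>A \<Longrightarrow> PV V (g x)) \<Longrightarrow> PV V (prod g A)"
proof (induction A rule: infinite_finite_induct)
  case (infinite A) then show ?case using PV_const[of V 1] by (simp add: subring_def one_pCons)
next
  case empty then show ?case using PV_const[of V 1] by (simp add: subring_def one_pCons)
next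
  case (insert x F) then show ?case by (simp add: PV_mult)
qed

lemma PV_signof: "subring V \<Longrightarrow> PV V q \<Longrightarrow> PV V (signof p * q)"
  by (cases p rule: sign_cases) (auto simp: PV_def subring_uminus)

lemma char_poly_PV:
  assumes V: "subring V" and A: "A \<in> carrier_mat n n" and AV: "\<forall>i<n. \<forall>j<n. A $$ (i,j) \<in> V"
  shows "PV V (char_poly A)"
proof -
  have entry: "PV V (char_poly_matrix A $$ (i,j))" if "i < n" "j < n" for i j
  proof -
    have eq: "char_poly_matrix A $$ (i,j) = [:0,1:] * (if i = j then 1 else 0) + [:- A $$ (i,j):]"
      using A that by (simp add: char_poly_matrix_def)
    moreover have "PV V [:- A $$ (i,j):]" using AV that V by (simp add: PV_const subring_uminus)
    moreover have "PV V ([:0,1:] * (if i = j then 1 else 0))"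
      using PV_X[OF V] PV_const[OF V, of 0] V by (auto simp: subring_def one_pCons)
    ultimately show ?thesis unfolding eq by (intro PV_add[OF V])
  qed
  show ?thesis
    unfolding char_poly_def det_def'[OF char_poly_matrix_closed[OF A]]
  proof (rule PV_sum[OF V], rule PV_signof[OF V], rule PV_prod[OF V])
    fix p i assume p: "p \<in> {p. p permutes {0..<n}}" and i: "i \<in> {0..<n}"
    then have "p i < n" by (auto dest: permutes_in_image)
    with i show "PV V (char_poly_matrix A $$ (i, p i))" using entry by auto
  qed
qed

lemma det_trick:
  fixes N :: nat
  assumes V: "subring V" and N: "N > 0" and v0: "v 0 \<noteq> 0"
    and a: "\<forall>k<N. \<forall>l<N. a k l \<in> V"
    and eq: "\<forall>k<N. z * v k = (\<Sum>l<N. a k l * v l)"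
  shows "z \<in> integral_closure V"
proof -
  define A where "A = mat N N (\<lambda>(k,l). a k l)"
  define w where "w = vec N v"
  have A: "A \<in> carrier_mat N N" by (simp add: A_def)
  have "eigenvector A w z" unfolding eigenvector_def
  proof (intro conjI)
    show "w \<in> carrier_vec (dim_row A)" by (simp add: A_def w_def)
    show "w \<noteq> 0\<^sub>v (dim_row A)"
    proof
      assume "w = 0\<^sub>v (dim_row A)"
      then have "w $ 0 = 0" using N by (simp add: A_def)
      then show False using v0 N by (simp add: w_def)
    qed
    show "A *\<^sub>v w = z \<cdot>\<^sub>v w"
    proof (rule eq_vecI)
      fix k assume "k < dim_vec (z \<cdot>\<^sub>v w)"
      then have k: "k < N" by (simp add: w_def)
      have "(A *\<^sub>v w) $ k = (\<Sum>l\<in>{0..<N}. a k l * v l)"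
        using k by (simp add: A_def w_def scalar_prod_def)
      also have "\<dots> = z * v k" using eq k by (simp add: atLeast0LessThan)
      finally show "(A *\<^sub>v w) $ k = (z \<cdot>\<^sub>v w) $ k" using k by (simp add: w_def)
    qed (simp add: A_def w_def)
  qed
  then have "eigenvalue A z" by (auto simp: eigenvalue_def)
  then have root: "poly (char_poly A) z = 0" using eigenvalue_root_char_poly[OF A] by simp
  have "lead_coeff (char_poly A) = 1" using degree_monic_char_poly[OF A] by simp
  moreover have "PV V (char_poly A)" using char_poly_PV[OF V A] a by (simp add: A_def)
  ultimately show ?thesis using root unfolding integral_closure_def PV_def by blast
qed

definition modV :: "'k::field set \<Rightarrow> nat \<Rightarrow> (nat \<Rightarrow> 'k) \<Rightarrow> 'k set" where
  "modV V N v = {\<Sum>k<N. c k * v k | c. \<forall>k<N. c k \<in> V}"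

lemma modV_add: "subring V \<Longrightarrow> s \<in> modV V N v \<Longrightarrow> t \<in> modV V N v \<Longrightarrow> s + t \<in> modV V N v"
proof -
  assume V: "subring V" and "s \<in> modV V N v" "t \<in> modV V N v"
  then obtain c d where c: "\<forall>k<N. c k \<in> V" "s = (\<Sum>k<N. c k * v k)"
    and d: "\<forall>k<N. d k \<in> V" "t = (\<Sum>k<N. d k * v k)" by (auto simp: modV_def)
  have "s + t = (\<Sum>k<N. (c k + d k) * v k)" using c d by (simp add: sum.distrib distrib_right)
  moreover have "\<forall>k<N. c k + d k \<in> V" using c d V by (simp add: subring_def)
  ultimately show ?thesis unfolding modV_def by (intro CollectI exI[of _ "\<lambda>k. c k + d k"]) simp
qed

lemma modV_smult: "subring V \<Longrightarrow> r \<in> V \<Longrightarrow> s \<in> modV V N v \<Longrightarrow> r * s \<in> modV V N v"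
proof -
  assume V: "subring V" and r: "r \<in> V" and "s \<in> modV V N v"
  then obtain c where c: "\<forall>k<N. c k \<in> V" "s = (\<Sum>k<N. c k * v k)" by (auto simp: modV_def)
  have "r * s = (\<Sum>k<N. (r * c k) * v k)" using c by (simp add: sum_distrib_left mult.assoc)
  moreover have "\<forall>k<N. r * c k \<in> V" using c V r by (simp add: subring_def)
  ultimately show ?thesis unfolding modV_def by (intro CollectI exI[of _ "\<lambda>k. r * c k"]) simp
qed

lemma modV_zero: "subring V \<Longrightarrow> 0 \<in> modV V N v"
  unfolding modV_def by (rule CollectI, rule exI[of _ "\<lambda>_. 0"]) (auto simp: subring_def)

lemma modV_basis: "subring V \<Longrightarrow> j < N \<Longrightarrow> v j \<in> modV V N v"
  unfolding modV_def
proof (rule CollectI, rule exI[of _ "\<lambda>k. if k = j then 1 else 0"], intro conjI)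
  assume "subring V" "j < N"
  have "(\<Sum>k<N. (if k = j then 1 else 0) * v k) = (\<Sum>k<N. if k = j then v k else 0)"
    by (rule sum.cong) auto
  then show "v j = (\<Sum>k<N. (if k = j then 1 else 0) * v k)" using \<open>j < N\<close> by simp
  show "\<forall>k<N. (if k = j then 1 else 0) \<in> V" using \<open>subring V\<close> by (auto simp: subring_def)
qed

lemma modV_sum: "subring V \<Longrightarrow> (\<And>x. x\<in>A \<Longrightarrow> g x \<in> modV V N v) \<Longrightarrow> sum g A \<in> modV V N v"
  by (induction A rule: infinite_finite_induct) (auto intro: modV_add modV_zero)

lemma det_trick2:
  assumes V: "subring V" and N: "N > 0" and v0: "v 0 \<noteq> 0"
    and h: "\<forall>k<N. z * v k \<in> modV V N v"
  shows "z \<in> integral_closure V"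
proof -
  have "\<forall>k\<in>{..<N}. \<exists>c. (\<forall>l<N. c l \<in> V) \<and> z * v k = (\<Sum>l<N. c l * v l)"
    using h by (auto simp: modV_def)
  then obtain a where a: "\<forall>k\<in>{..<N}. (\<forall>l<N. a k l \<in> V) \<and> z * v k = (\<Sum>l<N. a k l * v l)"
    by (metis bchoice)
  show ?thesis by (rule det_trick[where a=a and v=v and z=z and N=N and V=V]) (use a V N v0 in auto)
qed

lemma monic_root_power:
  fixes p :: "'k::field poly"
  assumes "lead_coeff p = 1" "poly p x = 0"
  shows "x ^ degree p = (\<Sum>l<degree p. - coeff p l * x^l)"
proof -
  have "0 = (\<Sum>i\<le>degree p. coeff p i * x ^ i)" by (metis assms(2) poly_altdef)
  also have "\<dots> = (\<Sum>i<degree p. coeff p i * x ^ i) + x ^ degree p"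
    using assms(1) by (simp add: lessThan_Suc_atMost[symmetric])
  finally show ?thesis by (simp add: sum_negf eq_neg_iff_add_eq_0 add.commute)
qed

lemma monic_root_deg:
  fixes p :: "'k::field poly"
  assumes "lead_coeff p = 1" "poly p x = 0"
  shows "degree p > 0"
proof (rule ccontr)
  assume "\<not> degree p > 0"
  then have "degree p = 0" by simp
  then have "poly p x = coeff p 0" using poly_altdef[of p x] by simp
  then show False using assms \<open>degree p = 0\<close> by simp
qed

lemma index_bound:
  fixes l j m n :: nat
  assumes "l < m" "j < n"
  shows "l * n + j < m * n"
proof -
  have "Suc l * n \<le> m * n" using assms(1) by (intro mult_le_mono1) simp
  then show ?thesis using assms(2) by simp
qed

lemma integral_add_mult:
  assumes V: "subring V" and x: "x \<in> integral_closure V" and y: "y \<in> integral_closure V"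
  shows "x + y \<in> integral_closure V \<and> x * y \<in> integral_closure V"
proof -
  obtain p where p: "lead_coeff p = 1" "\<forall>i. coeff p i \<in> V" "poly p x = 0"
    using x by (auto simp: integral_closure_def)
  obtain q where q: "lead_coeff q = 1" "\<forall>i. coeff q i \<in> V" "poly q y = 0"
    using y by (auto simp: integral_closure_def)
  define m where "m = degree p"
  define n where "n = degree q"
  have m: "m > 0" using monic_root_deg[OF p(1) p(3)] by (simp add: m_def)
  have n: "n > 0" using monic_root_deg[OF q(1) q(3)] by (simp add: n_def)
  define N where "N = m * n"
  define v where "v k = x ^ (k div n) * y ^ (k mod n)" for k
  have N: "N > 0" using m n by (simp add: N_def)
  have v0: "v 0 \<noteq> 0" by (simp add: v_def)
  have vidx: "v (l * n + j) = x ^ l * y ^ j" if "j < n" for l j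
    using that by (simp add: v_def)
  have xm: "x ^ m = (\<Sum>l<m. - coeff p l * x^l)" using monic_root_power[OF p(1) p(3)] by (simp add: m_def)
  have yn: "y ^ n = (\<Sum>l<n. - coeff q l * y^l)" using monic_root_power[OF q(1) q(3)] by (simp add: n_def)
  have negV: "- coeff p l \<in> V" "- coeff q l \<in> V" for l using p q V by (auto intro: subring_uminus)
  have hx: "x * v k \<in> modV V N v" if k: "k < N" for k
  proof -
    define i where "i = k div n"
    define j where "j = k mod n"
    have kij: "k = i * n + j" by (simp add: i_def j_def)
    have i: "i < m" using k unfolding i_def N_def by (simp add: less_mult_imp_div_less)
    have j: "j < n" using n by (simp add: j_def)
    have vk: "v k = x ^ i * y ^ j" using kij vidx[OF j] by simp
    show ?thesis
    proof (cases "Suc i < m")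
      case True
      have "x * v k = v (Suc i * n + j)" using vk vidx[OF j, of "Suc i"] by simp
      moreover have "Suc i * n + j < N" unfolding N_def by (rule index_bound[OF True j])
      ultimately show ?thesis using modV_basis[OF V] by simp
    next
      case False
      then have mi: "m = Suc i" using i by simp
      have "x * v k = x ^ m * y ^ j" using vk unfolding mi by simp
      also have "\<dots> = (\<Sum>l<m. (- coeff p l) * v (l * n + j))"
        unfolding xm sum_distrib_right using vidx[OF j] by (simp add: mult.assoc)
      finally have eq: "x * v k = (\<Sum>l<m. (- coeff p l) * v (l * n + j))" .
      show ?thesis unfolding eq
        by (intro modV_sum[OF V] modV_smult[OF V] negV modV_basis[OF V])
           (simp add: N_def index_bound j)
    qed
  qed
  have hy: "y * v k \<in> modV V N v" if k: "k < N" for k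
  proof -
    define i where "i = k div n"
    define j where "j = k mod n"
    have kij: "k = i * n + j" by (simp add: i_def j_def)
    have i: "i < m" using k unfolding i_def N_def by (simp add: less_mult_imp_div_less)
    have j: "j < n" using n by (simp add: j_def)
    have vk: "v k = x ^ i * y ^ j" using kij vidx[OF j] by simp
    show ?thesis
    proof (cases "Suc j < n")
      case True
      have "y * v k = v (i * n + Suc j)" using vk vidx[OF True, of i] by simp
      moreover have "i * n + Suc j < N" unfolding N_def by (rule index_bound[OF i True])
      ultimately show ?thesis using modV_basis[OF V] by simp
    next
      case False
      then have nj: "n = Suc j" using j by simp
      have "y * v k = x ^ i * y ^ n" using vk unfolding nj by (simp add: ac_simps)
      also have "\<dots> = (\<Sum>l<n. (- coeff q l) * v (i * n + l))"
        unfolding yn sum_distrib_left using vidx by (simp add: ac_simps)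
      finally have eq: "y * v k = (\<Sum>l<n. (- coeff q l) * v (i * n + l))" .
      show ?thesis unfolding eq
        by (intro modV_sum[OF V] modV_smult[OF V] negV modV_basis[OF V])
           (simp add: N_def index_bound i)
    qed
  qed
  have lin: "z * s \<in> modV V N v" if hz: "\<forall>k<N. z * v k \<in> modV V N v" and s: "s \<in> modV V N v" for z s
  proof -
    obtain c where c: "\<forall>k<N. c k \<in> V" "s = (\<Sum>k<N. c k * v k)" using s by (auto simp: modV_def)
    have "z * s = (\<Sum>k<N. c k * (z * v k))" using c by (simp add: sum_distrib_left ac_simps)
    also have "\<dots> \<in> modV V N v" by (intro modV_sum[OF V], rule modV_smult[OF V]) (use c hz in auto)
    finally show ?thesis .
  qed
  have "x + y \<in> integral_closure V"
    by (rule det_trick2[where V=V and N=N and v=v and z="x+y"]) (use V N v0 hx hy modV_add[OF V] in \<open>auto simp: distrib_right\<close>)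
  moreover have "x * y \<in> integral_closure V"
  proof (rule det_trick2[where V=V and N=N and v=v and z="x*y"], (fact V N v0)+, intro allI impI)
    fix k assume "k < N"
    then have "x * (y * v k) \<in> modV V N v" using lin[OF _ hy[OF \<open>k<N\<close>]] hx by blast
    then show "x * y * v k \<in> modV V N v" by (simp add: mult.assoc)
  qed
  ultimately show ?thesis ..
qed

lemma V_sub_S: "subring V \<Longrightarrow> a \<in> V \<Longrightarrow> a \<in> integral_closure V"
  unfolding integral_closure_def
  by (rule CollectI, rule exI[of _ "[:-a, 1:]"]) (auto simp: coeff_pCons subring_def subring_uminus split: nat.split)

lemma subring_S: assumes V: "subring V" shows "subring (integral_closure V)"
proof -
  have z: "0 \<in> V" and o: "1 \<in> V" "-1 \<in> V" using V by (auto simp: subring_def intro: subring_uminus)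
  show ?thesis unfolding subring_def
  proof (intro conjI ballI)
    fix a b assume a: "a \<in> integral_closure V" and b: "b \<in> integral_closure V"
    show "a + b \<in> integral_closure V" "a * b \<in> integral_closure V"
      using integral_add_mult[OF V a b] by auto
    have "(-1) * b \<in> integral_closure V" using integral_add_mult[OF V V_sub_S[OF V o(2)] b] by auto
    then show "a - b \<in> integral_closure V" using integral_add_mult[OF V a, of "(-1) * b"] by simp
  qed (use V_sub_S[OF V] z o in auto)
qed




abbreviation iv :: "('a \<Rightarrow> 'b) \<Rightarrow> 'b \<Rightarrow> 'a" where "iv \<equiv> Hilbert_Choice.inv"

section \<open>Field automorphisms\<close>

lemma fa_add: "field_aut \<sigma> \<Longrightarrow> \<sigma> (x + y) = \<sigma> x + \<sigma> y" by (simp add: field_aut_def)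
lemma fa_mult: "field_aut \<sigma> \<Longrightarrow> \<sigma> (x * y) = \<sigma> x * \<sigma> y" by (simp add: field_aut_def)
lemma fa_1: "field_aut \<sigma> \<Longrightarrow> \<sigma> 1 = 1" by (simp add: field_aut_def)
lemma fa_bij: "field_aut \<sigma> \<Longrightarrow> bij \<sigma>" by (simp add: field_aut_def)
lemma fa_0: assumes a: "field_aut \<sigma>" shows "\<sigma> 0 = 0"
proof -
  have h: "\<sigma> 0 + \<sigma> 0 = \<sigma> 0 + 0" using fa_add[OF a, of 0 0] by (simp only: add_0_right add_0_left)
  then show ?thesis by (simp only: add_left_cancel)
qed
lemma fa_uminus: assumes a: "field_aut \<sigma>" shows "\<sigma> (- x) = - \<sigma> x"
proof -
  have h: "\<sigma> x + \<sigma> (- x) = 0" using fa_add[OF a, of x "-x"] fa_0[OF a] by simp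
  show ?thesis using add.inverse_unique[OF h] by simp
qed
lemma fa_diff: "field_aut \<sigma> \<Longrightarrow> \<sigma> (x - y) = \<sigma> x - \<sigma> y"
  using fa_add[of \<sigma> x "-y"] fa_uminus[of \<sigma> y] by simp
lemma fa_sum: "field_aut \<sigma> \<Longrightarrow> \<sigma> (\<Sum>x\<in>A. g x) = (\<Sum>x\<in>A. \<sigma> (g x))"
  by (induction A rule: infinite_finite_induct) (auto simp: fa_0 fa_add)
lemma fa_power: "field_aut \<sigma> \<Longrightarrow> \<sigma> (x ^ n) = \<sigma> x ^ n"
  by (induction n) (auto simp: fa_1 fa_mult)
lemma fa_poly: "field_aut \<sigma> \<Longrightarrow> (\<forall>i. \<sigma> (coeff p i) = coeff p i) \<Longrightarrow> \<sigma> (poly p x) = poly p (\<sigma> x)"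
  by (simp add: poly_altdef fa_sum fa_mult fa_power)

lemma fa_inv_cancel: "field_aut \<sigma> \<Longrightarrow> \<sigma> (iv \<sigma> x) = x"
  using fa_bij[of \<sigma>] by (simp add: bij_is_surj surj_f_inv_f)
lemma fa_cancel_inv: "field_aut \<sigma> \<Longrightarrow> iv \<sigma> (\<sigma> x) = x"
  using fa_bij[of \<sigma>] by (simp add: bij_is_inj inv_f_f)

lemma fa_inv: assumes "field_aut \<sigma>" shows "field_aut (iv \<sigma>)"
  unfolding field_aut_def
proof (intro conjI allI)
  show "bij (iv \<sigma>)" using assms fa_bij bij_imp_bij_inv by blast
  show "iv \<sigma> 1 = 1" using fa_cancel_inv[OF assms, of 1] fa_1[OF assms] by simp
  fix x y
  have "iv \<sigma> (x + y) = iv \<sigma> (\<sigma> (iv \<sigma> x + iv \<sigma> y))"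
    by (simp add: fa_add[OF assms] fa_inv_cancel[OF assms])
  then show "iv \<sigma> (x + y) = iv \<sigma> x + iv \<sigma> y" by (simp add: fa_cancel_inv[OF assms])
  have "iv \<sigma> (x * y) = iv \<sigma> (\<sigma> (iv \<sigma> x * iv \<sigma> y))"
    by (simp add: fa_mult[OF assms] fa_inv_cancel[OF assms])
  then show "iv \<sigma> (x * y) = iv \<sigma> x * iv \<sigma> y" by (simp add: fa_cancel_inv[OF assms])
qed

lemma fa_comp: "field_aut \<sigma> \<Longrightarrow> field_aut \<tau> \<Longrightarrow> field_aut (\<sigma> \<circ> \<tau>)"
  unfolding field_aut_def by (auto intro: bij_comp)

lemma fa_id: "field_aut id" by (simp add: field_aut_def)

lemma gal_id: "id \<in> gal F" by (simp add: gal_def fa_id)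
lemma gal_inv: "\<sigma> \<in> gal F \<Longrightarrow> iv \<sigma> \<in> gal F"
proof -
  assume s: "\<sigma> \<in> gal F"
  then have fa: "field_aut \<sigma>" and fx: "\<forall>x\<in>F. \<sigma> x = x" by (auto simp: gal_def)
  have "\<forall>x\<in>F. iv \<sigma> x = x"
  proof
    fix x assume "x \<in> F"
    then have "iv \<sigma> (\<sigma> x) = iv \<sigma> x" using fx by simp
    then show "iv \<sigma> x = x" using fa_cancel_inv[OF fa, of x] by simp
  qed
  then show ?thesis using fa_inv[OF fa] by (simp add: gal_def)
qed
lemma gal_comp: "\<sigma> \<in> gal F \<Longrightarrow> \<tau> \<in> gal F \<Longrightarrow> \<sigma> \<circ> \<tau> \<in> gal F"
  unfolding gal_def using fa_comp by auto

lemma gal_S: assumes "\<sigma> \<in> gal F" "V \<subseteq> F" "x \<in> integral_closure V"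
  shows "\<sigma> x \<in> integral_closure V"
proof -
  obtain p where p: "lead_coeff p = 1" "\<forall>i. coeff p i \<in> V" "poly p x = 0"
    using assms(3) by (auto simp: integral_closure_def)
  have fa: "field_aut \<sigma>" and fx: "\<forall>i. \<sigma> (coeff p i) = coeff p i"
    using assms(1,2) p(2) by (auto simp: gal_def)
  have "poly p (\<sigma> x) = 0" using fa_poly[OF fa fx, of x] p(3) fa_0[OF fa] by simp
  then show ?thesis using p unfolding integral_closure_def by blast
qed

section \<open>Ideals\<close>

lemma ideal_add: "ideal_in S M \<Longrightarrow> x \<in> M \<Longrightarrow> y \<in> M \<Longrightarrow> x + y \<in> M"
  by (simp add: ideal_in_def)
lemma ideal_mult: "ideal_in S M \<Longrightarrow> s \<in> S \<Longrightarrow> x \<in> M \<Longrightarrow> s * x \<in> M"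
  by (simp add: ideal_in_def)
lemma ideal_mult2: "ideal_in S M \<Longrightarrow> s \<in> S \<Longrightarrow> x \<in> M \<Longrightarrow> x * s \<in> M"
  by (simp add: ideal_in_def mult.commute)
lemma ideal_0: "ideal_in S M \<Longrightarrow> 0 \<in> M" by (simp add: ideal_in_def)
lemma ideal_sub: "ideal_in S M \<Longrightarrow> M \<subseteq> S" by (simp add: ideal_in_def)
lemma ideal_diff: "subring S \<Longrightarrow> ideal_in S M \<Longrightarrow> x \<in> M \<Longrightarrow> y \<in> M \<Longrightarrow> x - y \<in> M"
proof -
  assume S: "subring S" and M: "ideal_in S M" and xy: "x \<in> M" "y \<in> M"
  have "-1 \<in> S" using S by (auto simp: subring_def intro: subring_uminus)
  then have "(-1) * y \<in> M" using ideal_mult[OF M _ xy(2)] by blast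
  then have "- y \<in> M" by simp
  from ideal_add[OF M xy(1) this] show ?thesis by simp
qed
lemma ideal_sum: "ideal_in S M \<Longrightarrow> (\<And>x. x\<in>A \<Longrightarrow> g x \<in> M) \<Longrightarrow> sum g A \<in> M"
  by (induction A rule: infinite_finite_induct) (auto simp: ideal_0 ideal_add)
lemma ideal_one: "ideal_in S M \<Longrightarrow> 1 \<in> M \<Longrightarrow> M = S"
proof -
  assume M: "ideal_in S M" and o: "1 \<in> M"
  have "s \<in> M" if "s \<in> S" for s using ideal_mult[OF M that o] by simp
  then show ?thesis using ideal_sub[OF M] by blast
qed

lemma maximal_exists:
  assumes S: "subring S" and I: "ideal_in S I" and one: "1 \<notin> I"
  shows "\<exists>M. maximal_ideal_in S M \<and> I \<subseteq> M"
proof -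
  define A where "A = {J. ideal_in S J \<and> I \<subseteq> J \<and> 1 \<notin> J}"
  have "\<exists>M\<in>A. \<forall>X\<in>A. M \<subseteq> X \<longrightarrow> X = M"
  proof (rule subset_Zorn_nonempty)
    show "A \<noteq> {}" using I one by (auto simp: A_def)
    fix C assume C: "C \<noteq> {}" "subset.chain A C"
    then have CA: "C \<subseteq> A" and ch: "\<forall>X\<in>C. \<forall>Y\<in>C. X \<subseteq> Y \<or> Y \<subseteq> X"
      by (auto simp: subset.chain_def)
    obtain J0 where J0: "J0 \<in> C" using C by auto
    have "ideal_in S (\<Union>C)" unfolding ideal_in_def
    proof (intro conjI ballI)
      show "\<Union>C \<subseteq> S" using CA by (auto simp: A_def ideal_in_def)
      show "0 \<in> \<Union>C" using J0 CA by (auto simp: A_def ideal_in_def)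
      fix x y assume x: "x \<in> \<Union>C" and y: "y \<in> \<Union>C"
      then obtain X Y where XY: "X \<in> C" "Y \<in> C" "x \<in> X" "y \<in> Y" by auto
      then have "x \<in> X \<and> y \<in> X \<or> x \<in> Y \<and> y \<in> Y" using ch by blast
      moreover have "ideal_in S X" "ideal_in S Y" using CA XY by (auto simp: A_def)
      ultimately have "x + y \<in> X \<or> x + y \<in> Y" using ideal_add by blast
      then show "x + y \<in> \<Union>C" using XY by blast
    next
      fix s x assume "s \<in> S" "x \<in> \<Union>C"
      then obtain X where "X \<in> C" "x \<in> X" by auto
      moreover have "ideal_in S X" using CA \<open>X \<in> C\<close> by (auto simp: A_def)
      ultimately show "s * x \<in> \<Union>C" using ideal_mult \<open>s \<in> S\<close> by blast
    qed
    then show "\<Union>C \<in> A" using CA J0 by (auto simp: A_def)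
  qed
  then obtain M where M: "M \<in> A" and mx: "\<forall>X\<in>A. M \<subseteq> X \<longrightarrow> X = M" by blast
  have "maximal_ideal_in S M" unfolding maximal_ideal_in_def
  proof (intro conjI allI impI)
    show "ideal_in S M" using M by (simp add: A_def)
    show "M \<noteq> S" using M S by (auto simp: A_def subring_def)
    fix J assume J: "ideal_in S J \<and> M \<subseteq> J \<and> J \<noteq> S"
    then have "1 \<notin> J" using ideal_one by blast
    then have "J \<in> A" using J M by (auto simp: A_def)
    then show "J = M" using mx J by blast
  qed
  then show ?thesis using M by (auto simp: A_def)
qed

lemma maximal_prime:
  assumes S: "subring S" and M: "maximal_ideal_in S M" and a: "a \<in> S" and b: "b \<in> S"
    and ab: "a * b \<in> M" and na: "a \<notin> M"
  shows "b \<in> M"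
proof -
  have MI: "ideal_in S M" and MS: "M \<noteq> S" using M by (auto simp: maximal_ideal_in_def)
  define J where "J = {m + s * a | m s. m \<in> M \<and> s \<in> S}"
  have JI: "ideal_in S J" unfolding ideal_in_def
  proof (intro conjI ballI)
    show "J \<subseteq> S" using ideal_sub[OF MI] S a by (auto simp: J_def subring_def)
    show "0 \<in> J" unfolding J_def using ideal_0[OF MI] S
      by (intro CollectI exI[of _ 0]) (auto simp: subring_def)
    fix x y assume "x \<in> J" "y \<in> J"
    then obtain m1 s1 m2 s2 where "x = m1 + s1 * a" "y = m2 + s2 * a" "m1 \<in> M" "m2 \<in> M" "s1 \<in> S" "s2 \<in> S"
      by (auto simp: J_def)
    then have eq: "x + y = (m1 + m2) + (s1 + s2) * a" "m1 + m2 \<in> M" "s1 + s2 \<in> S"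
      using MI S by (auto simp: algebra_simps ideal_add subring_def)
    then show "x + y \<in> J" unfolding J_def by blast
  next
    fix t x assume t: "t \<in> S" and "x \<in> J"
    then obtain m s where ms: "x = m + s * a" "m \<in> M" "s \<in> S" by (auto simp: J_def)
    have eq: "t * x = t * m + (t * s) * a" using ms(1) by (simp add: algebra_simps)
    have "t * m \<in> M" "t * s \<in> S" using ms MI S t by (auto simp: ideal_mult subring_def)
    then show "t * x \<in> J" unfolding J_def eq by blast
  qed
  have "M \<subseteq> J"
  proof
    fix m assume "m \<in> M"
    moreover have "m = m + 0 * a" by simp
    moreover have "(0::'a) \<in> S" using S by (simp add: subring_def)
    ultimately show "m \<in> J" unfolding J_def by blast
  qed
  moreover have "a \<in> J" unfolding J_def using S
    by (intro CollectI exI[of _ 0] exI[of _ 1]) (auto simp: subring_def ideal_0[OF MI])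
  moreover have mx: "\<forall>J'. ideal_in S J' \<and> M \<subseteq> J' \<and> J' \<noteq> S \<longrightarrow> J' = M"
    using M by (simp add: maximal_ideal_in_def)
  ultimately have "J = S" using JI na by blast
  then have "1 \<in> J" using S by (simp add: subring_def)
  then obtain m s where ms: "1 = m + s * a" "m \<in> M" "s \<in> S" by (auto simp: J_def)
  have "b = b * (m + s * a)" using ms(1) by simp
  also have "\<dots> = b * m + s * (a * b)" by (simp add: algebra_simps)
  also have "\<dots> \<in> M"
  proof -
    have "b * m \<in> M" using ideal_mult[OF MI b ms(2)] .
    moreover have "s * (a * b) \<in> M" using ideal_mult[OF MI ms(3) ab] .
    ultimately show ?thesis using ideal_add[OF MI] by blast
  qed
  finally show ?thesis .
qed

lemma ideal_image:
  assumes fa: "field_aut \<sigma>" and S1: "\<forall>x\<in>S. \<sigma> x \<in> S" and S2: "\<forall>x\<in>S. iv \<sigma> x \<in> S"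
    and M: "ideal_in S M"
  shows "ideal_in S (\<sigma> ` M)"
  unfolding ideal_in_def
proof (intro conjI ballI)
  show "\<sigma> ` M \<subseteq> S" using ideal_sub[OF M] S1 by auto
  have "\<sigma> 0 \<in> \<sigma> ` M" using ideal_0[OF M] by (rule imageI)
  then show "0 \<in> \<sigma> ` M" using fa_0[OF fa] by simp
  fix x y assume "x \<in> \<sigma> ` M" "y \<in> \<sigma> ` M"
  then obtain m n where "x = \<sigma> m" "y = \<sigma> n" "m \<in> M" "n \<in> M" by auto
  then have "x + y = \<sigma> (m + n)" "m + n \<in> M" using ideal_add[OF M] fa_add[OF fa] by auto
  then show "x + y \<in> \<sigma> ` M" by (rule image_eqI)
next
  fix s x assume s: "s \<in> S" and "x \<in> \<sigma> ` M"
  then obtain m where m: "x = \<sigma> m" "m \<in> M" by auto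
  have "s * x = \<sigma> (iv \<sigma> s * m)" using m fa_mult[OF fa] fa_inv_cancel[OF fa] by simp
  moreover have "iv \<sigma> s * m \<in> M" using ideal_mult[OF M] S2 s m by simp
  ultimately show "s * x \<in> \<sigma> ` M" by simp
qed

lemma maximal_image:
  assumes S: "subring S" and fa: "field_aut \<sigma>" and S1: "\<forall>x\<in>S. \<sigma> x \<in> S" and S2: "\<forall>x\<in>S. iv \<sigma> x \<in> S"
    and M: "maximal_ideal_in S M"
  shows "maximal_ideal_in S (\<sigma> ` M)"
proof -
  have MI: "ideal_in S M" and MS: "M \<noteq> S"
    and mx: "\<And>J. ideal_in S J \<Longrightarrow> M \<subseteq> J \<Longrightarrow> J \<noteq> S \<Longrightarrow> J = M"
    using M by (auto simp: maximal_ideal_in_def)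
  have fa': "field_aut (iv \<sigma>)" using fa_inv[OF fa] .
  have ii: "iv (iv \<sigma>) = \<sigma>" using fa_bij[OF fa] inv_inv_eq by blast
  have one: "1 \<in> S" using S by (simp add: subring_def)
  show ?thesis unfolding maximal_ideal_in_def
  proof (intro conjI allI impI)
    show I: "ideal_in S (\<sigma> ` M)" by (rule ideal_image[OF fa S1 S2 MI])
    show "\<sigma> ` M \<noteq> S"
    proof
      assume "\<sigma> ` M = S"
      then have "1 \<in> \<sigma> ` M" using one by simp
      then obtain m where m: "m \<in> M" "1 = \<sigma> m" by (rule imageE)
      have "m = 1" using fa_cancel_inv[OF fa, of m] m(2) fa_1[OF fa'] by simp
      then have "1 \<in> M" using m by simp
      then show False using ideal_one[OF MI] MS by blast
    qed
    fix J assume J: "ideal_in S J \<and> \<sigma> ` M \<subseteq> J \<and> J \<noteq> S"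
    have JI: "ideal_in S (iv \<sigma> ` J)" using ideal_image[OF fa' S2] S1 J ii by simp
    have sub: "M \<subseteq> iv \<sigma> ` J"
    proof
      fix m assume "m \<in> M"
      then have "\<sigma> m \<in> J" using J by auto
      then show "m \<in> iv \<sigma> ` J" using fa_cancel_inv[OF fa, of m] by (metis image_eqI)
    qed
    have ne: "iv \<sigma> ` J \<noteq> S"
    proof
      assume "iv \<sigma> ` J = S"
      then have "1 \<in> iv \<sigma> ` J" using one by simp
      then obtain j where j: "j \<in> J" "1 = iv \<sigma> j" by (rule imageE)
      have "j = 1" using fa_inv_cancel[OF fa, of j] j(2) fa_1[OF fa] by simp
      then have "1 \<in> J" using j by simp
      then show False using ideal_one J by blast
    qed
    have "iv \<sigma> ` J = M" using mx[OF JI sub ne] .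
    then have "\<sigma> ` (iv \<sigma> ` J) = \<sigma> ` M" by metis
    moreover have "\<sigma> ` (iv \<sigma> ` J) = J" by (simp add: image_image fa_inv_cancel[OF fa])
    ultimately show "J = \<sigma> ` M" by metis
  qed
qed




definition embx :: "('k::field \<Rightarrow> 'k) \<Rightarrow> 'k \<Rightarrow> (('k \<Rightarrow> 'k) \<Rightarrow> 'k)" where
  "embx \<sigma> s = (\<lambda>\<tau>. if \<tau> = \<sigma> then s else 0)"

lemma embx_apply[simp]: "embx \<sigma> s \<tau> = (if \<tau> = \<sigma> then s else 0)" by (simp add: embx_def)

locale cpset =
  fixes G :: "('k::field \<Rightarrow> 'k) set" and S :: "'k set" and f :: "('k \<Rightarrow> 'k) \<Rightarrow> ('k \<Rightarrow> 'k) \<Rightarrow> 'k"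
  assumes S: "subring S" and Gfin: "finite G" and Gid: "id \<in> G"
    and Ginv: "\<And>\<sigma>. \<sigma> \<in> G \<Longrightarrow> iv \<sigma> \<in> G"
    and Gcomp: "\<And>\<sigma> \<tau>. \<sigma> \<in> G \<Longrightarrow> \<tau> \<in> G \<Longrightarrow> \<sigma> \<circ> \<tau> \<in> G"
    and Gaut: "\<And>\<sigma>. \<sigma> \<in> G \<Longrightarrow> field_aut \<sigma>"
    and GS: "\<And>\<sigma> x. \<sigma> \<in> G \<Longrightarrow> x \<in> S \<Longrightarrow> \<sigma> x \<in> S"
    and coc: "normalized_cocycle G S f"
begin

lemma fS: "\<sigma> \<in> G \<Longrightarrow> \<tau> \<in> G \<Longrightarrow> f \<sigma> \<tau> \<in> S"
  using coc by (auto simp: normalized_cocycle_def)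
lemma cocycle: "\<sigma> \<in> G \<Longrightarrow> \<tau> \<in> G \<Longrightarrow> \<gamma> \<in> G \<Longrightarrow>
    \<sigma> (f \<tau> \<gamma>) * f \<sigma> (\<tau> \<circ> \<gamma>) = f \<sigma> \<tau> * f (\<sigma> \<circ> \<tau>) \<gamma>"
  using coc by (auto simp: normalized_cocycle_def)
lemma f_id1: "\<sigma> \<in> G \<Longrightarrow> f id \<sigma> = 1" using coc by (auto simp: normalized_cocycle_def)
lemma f_id2: "\<sigma> \<in> G \<Longrightarrow> f \<sigma> id = 1" using coc by (auto simp: normalized_cocycle_def)

lemma S0: "0 \<in> S" and S1: "1 \<in> S" using S by (auto simp: subring_def)
lemma Sadd: "x \<in> S \<Longrightarrow> y \<in> S \<Longrightarrow> x + y \<in> S" using S by (auto simp: subring_def)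
lemma Sdiff: "x \<in> S \<Longrightarrow> y \<in> S \<Longrightarrow> x - y \<in> S" using S by (auto simp: subring_def)
lemma Smult: "x \<in> S \<Longrightarrow> y \<in> S \<Longrightarrow> x * y \<in> S" using S by (auto simp: subring_def)
lemma Ssum: "(\<And>x. x \<in> A \<Longrightarrow> g x \<in> S) \<Longrightarrow> sum g A \<in> S" using subring_sum[OF S] by blast

lemma inv_l: "\<sigma> \<in> G \<Longrightarrow> iv \<sigma> \<circ> \<sigma> = id"
  using fa_cancel_inv[OF Gaut] by (auto simp: fun_eq_iff)
lemma inv_r: "\<sigma> \<in> G \<Longrightarrow> \<sigma> \<circ> iv \<sigma> = id"
  using fa_inv_cancel[OF Gaut] by (auto simp: fun_eq_iff)

lemma f_inv: assumes r: "\<rho> \<in> G" shows "\<rho> (f (iv \<rho>) \<rho>) = f \<rho> (iv \<rho>)"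
  using cocycle[OF r Ginv[OF r] r] inv_l[OF r] inv_r[OF r] f_id1[OF r] f_id2[OF r] by simp
lemma f_inv': assumes r: "\<rho> \<in> G" shows "iv \<rho> (f \<rho> (iv \<rho>)) = f (iv \<rho>) \<rho>"
proof -
  have "iv \<rho> (f \<rho> (iv \<rho>)) = iv \<rho> (\<rho> (f (iv \<rho>) \<rho>))" using f_inv[OF r] by simp
  then show ?thesis using fa_cancel_inv[OF Gaut[OF r]] by simp
qed

abbreviation "C \<equiv> cp_carrier G S"

lemma sdelta: "(\<Sum>x\<in>G. if x = a then g x else 0) = (if a \<in> G then g a else 0)"
  by (rule sum.delta[OF Gfin])
lemma sdelta_c: "a \<in> G \<Longrightarrow> (\<Sum>x\<in>G. if x = a then g x else 0) = g a"
  by (simp add: sdelta)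

lemma emb_C: "\<sigma> \<in> G \<Longrightarrow> s \<in> S \<Longrightarrow> embx \<sigma> s \<in> C"
  by (auto simp: cp_carrier_def embx_def S0)

lemma C_S: "a \<in> C \<Longrightarrow> \<sigma> \<in> G \<Longrightarrow> a \<sigma> \<in> S" by (simp add: cp_carrier_def)
lemma C_0: "a \<in> C \<Longrightarrow> \<sigma> \<notin> G \<Longrightarrow> a \<sigma> = 0" by (simp add: cp_carrier_def)

lemma mult_right_emb:
  assumes t0: "\<tau>0 \<in> G"
  shows "cp_mult G f c (embx \<tau>0 s) \<rho> = (\<Sum>\<sigma>\<in>G. if \<sigma> \<circ> \<tau>0 = \<rho> then c \<sigma> * \<sigma> s * f \<sigma> \<tau>0 else 0)"
  unfolding cp_mult_def
proof (rule sum.cong[OF refl])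
  fix \<sigma> assume s: "\<sigma> \<in> G"
  have "(\<Sum>\<tau>\<in>G. if \<sigma> \<circ> \<tau> = \<rho> then c \<sigma> * \<sigma> (embx \<tau>0 s \<tau>) * f \<sigma> \<tau> else 0)
      = (\<Sum>\<tau>\<in>G. if \<tau> = \<tau>0 then (if \<sigma> \<circ> \<tau>0 = \<rho> then c \<sigma> * \<sigma> s * f \<sigma> \<tau>0 else 0) else 0)"
    by (rule sum.cong[OF refl]) (auto simp: embx_def fa_0[OF Gaut[OF s]])
  also have "\<dots> = (if \<sigma> \<circ> \<tau>0 = \<rho> then c \<sigma> * \<sigma> s * f \<sigma> \<tau>0 else 0)"
    by (rule sdelta_c[OF t0])
  finally show "(\<Sum>\<tau>\<in>G. if \<sigma> \<circ> \<tau> = \<rho> then c \<sigma> * \<sigma> (embx \<tau>0 s \<tau>) * f \<sigma> \<tau> else 0)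
      = (if \<sigma> \<circ> \<tau>0 = \<rho> then c \<sigma> * \<sigma> s * f \<sigma> \<tau>0 else 0)" .
qed

lemma mult_left_emb:
  assumes s0: "\<sigma>0 \<in> G"
  shows "cp_mult G f (embx \<sigma>0 t) a \<rho> = (\<Sum>\<tau>\<in>G. if \<sigma>0 \<circ> \<tau> = \<rho> then t * \<sigma>0 (a \<tau>) * f \<sigma>0 \<tau> else 0)"
proof -
  have "cp_mult G f (embx \<sigma>0 t) a \<rho> = (\<Sum>\<sigma>\<in>G. if \<sigma> = \<sigma>0 then
          (\<Sum>\<tau>\<in>G. if \<sigma>0 \<circ> \<tau> = \<rho> then t * \<sigma>0 (a \<tau>) * f \<sigma>0 \<tau> else 0) else 0)"
    unfolding cp_mult_def by (rule sum.cong[OF refl]) (auto cong: if_cong)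
  also have "\<dots> = (\<Sum>\<tau>\<in>G. if \<sigma>0 \<circ> \<tau> = \<rho> then t * \<sigma>0 (a \<tau>) * f \<sigma>0 \<tau> else 0)"
    by (rule sdelta_c[OF s0])
  finally show ?thesis .
qed

lemma mult_unit: assumes c: "c \<in> C" shows "cp_mult G f c (embx id 1) = c"
proof
  fix \<rho>
  have "cp_mult G f c (embx id 1) \<rho> = (\<Sum>\<sigma>\<in>G. if \<sigma> \<circ> id = \<rho> then c \<sigma> * \<sigma> 1 * f \<sigma> id else 0)"
    by (rule mult_right_emb[OF Gid])
  also have "\<dots> = (\<Sum>\<sigma>\<in>G. if \<sigma> = \<rho> then c \<sigma> else 0)"
    by (rule sum.cong[OF refl]) (auto simp: fa_1[OF Gaut] f_id2)
  also have "\<dots> = (if \<rho> \<in> G then c \<rho> else 0)" by (rule sdelta)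
  also have "\<dots> = c \<rho>" using c by (auto simp: cp_carrier_def)
  finally show "cp_mult G f c (embx id 1) \<rho> = c \<rho>" .
qed

lemma mult_emb_emb: "cp_mult G f (embx id t) (embx id s) = embx id (t * s)"
proof
  fix \<rho>
  have "cp_mult G f (embx id t) (embx id s) \<rho> = (\<Sum>\<tau>\<in>G. if id \<circ> \<tau> = \<rho> then t * id (embx id s \<tau>) * f id \<tau> else 0)"
    by (rule mult_left_emb[OF Gid])
  also have "\<dots> = (\<Sum>\<tau>\<in>G. if \<tau> = \<rho> then t * embx id s \<tau> else 0)"
    by (rule sum.cong[OF refl]) (auto simp: f_id1)
  also have "\<dots> = (if \<rho> \<in> G then t * embx id s \<rho> else 0)" by (rule sdelta)
  also have "\<dots> = embx id (t * s) \<rho>" using Gid by auto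
  finally show "cp_mult G f (embx id t) (embx id s) \<rho> = embx id (t * s) \<rho>" .
qed

lemma mult_C: assumes c: "c \<in> C" and a: "a \<in> C" shows "cp_mult G f c a \<in> C"
  unfolding cp_carrier_def
proof (intro CollectI conjI ballI allI impI)
  fix \<rho> assume "\<rho> \<in> G"
  have t: "c \<sigma> * \<sigma> (a \<tau>) * f \<sigma> \<tau> \<in> S" if "\<sigma> \<in> G" "\<tau> \<in> G" for \<sigma> \<tau>
  proof -
    have "c \<sigma> \<in> S" "\<sigma> (a \<tau>) \<in> S" "f \<sigma> \<tau> \<in> S"
      using that C_S[OF c] C_S[OF a] GS fS by auto
    then show ?thesis using Smult by blast
  qed
  show "cp_mult G f c a \<rho> \<in> S" unfolding cp_mult_def
    by (intro Ssum) (use t S0 in auto)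
next
  fix \<rho> assume r: "\<rho> \<notin> G"
  show "cp_mult G f c a \<rho> = 0" unfolding cp_mult_def
    by (intro sum.neutral ballI) (use r Gcomp in auto)
qed

lemma hcomp_emb: "hcomp a \<sigma> = embx \<sigma> (a \<sigma>)" by (simp add: hcomp_def embx_def)

definition L1 :: "(('k \<Rightarrow> 'k) \<Rightarrow> 'k) set \<Rightarrow> 'k set" where
  "L1 L = {s \<in> S. embx id s \<in> L}"

definition Lm :: "'k set \<Rightarrow> (('k \<Rightarrow> 'k) \<Rightarrow> 'k) set" where
  "Lm M = {a \<in> C. \<forall>\<rho>\<in>G. iv \<rho> (a \<rho>) * f (iv \<rho>) \<rho> \<in> M}"

lemma emb_zero: "embx \<sigma> 0 = (\<lambda>_. 0)" by (simp add: embx_def fun_eq_iff)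
lemma emb_add: "cp_add (embx \<sigma> s) (embx \<sigma> t) = embx \<sigma> (s + t)" by (simp add: embx_def cp_add_def fun_eq_iff)

lemma L1_ideal: assumes L: "graded_left_ideal G S f L" shows "ideal_in S (L1 L)"
  unfolding ideal_in_def
proof (intro conjI ballI)
  show "L1 L \<subseteq> S" by (auto simp: L1_def)
  show "0 \<in> L1 L" using L S0 by (simp add: L1_def emb_zero graded_left_ideal_def)
  fix x y assume "x \<in> L1 L" "y \<in> L1 L"
  then show "x + y \<in> L1 L" using L by (simp add: L1_def Sadd graded_left_ideal_def flip: emb_add)
next
  fix s x assume s: "s \<in> S" and x: "x \<in> L1 L"
  have "cp_mult G f (embx id s) (embx id x) \<in> L"
    using L s x emb_C[OF Gid s] by (auto simp: L1_def graded_left_ideal_def)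
  then show "s * x \<in> L1 L" using s x by (simp add: L1_def mult_emb_emb Smult)
qed

lemma L1_proper: assumes L: "graded_left_ideal G S f L" and ne: "L \<noteq> C" shows "1 \<notin> L1 L"
proof
  assume "1 \<in> L1 L"
  then have e: "embx id 1 \<in> L" by (simp add: L1_def)
  have "C \<subseteq> L"
  proof
    fix c assume c: "c \<in> C"
    then have "cp_mult G f c (embx id 1) \<in> L" using L e by (simp add: graded_left_ideal_def)
    then show "c \<in> L" using mult_unit[OF c] by simp
  qed
  moreover have "L \<subseteq> C" using L by (simp add: graded_left_ideal_def)
  ultimately show False using ne by blast
qed

lemma inv_comp_id: assumes r: "\<rho> \<in> G" shows "iv \<rho> \<circ> \<tau> = id \<longleftrightarrow> \<tau> = \<rho>"
proof
  assume h: "iv \<rho> \<circ> \<tau> = id"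
  have "\<tau> = (\<rho> \<circ> iv \<rho>) \<circ> \<tau>" using inv_r[OF r] by simp
  also have "\<dots> = \<rho> \<circ> (iv \<rho> \<circ> \<tau>)" by (simp add: o_assoc)
  finally show "\<tau> = \<rho>" using h by simp
qed (use inv_l[OF r] in simp)

lemma key_val: assumes r: "\<rho> \<in> G"
  shows "cp_mult G f (embx (iv \<rho>) 1) a id = iv \<rho> (a \<rho>) * f (iv \<rho>) \<rho>"
proof -
  have "cp_mult G f (embx (iv \<rho>) 1) a id = (\<Sum>\<tau>\<in>G. if iv \<rho> \<circ> \<tau> = id then 1 * iv \<rho> (a \<tau>) * f (iv \<rho>) \<tau> else 0)"
    by (rule mult_left_emb[OF Ginv[OF r]])
  also have "\<dots> = (\<Sum>\<tau>\<in>G. if \<tau> = \<rho> then iv \<rho> (a \<tau>) * f (iv \<rho>) \<tau> else 0)"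
    by (rule sum.cong[OF refl]) (simp add: inv_comp_id[OF r])
  also have "\<dots> = iv \<rho> (a \<rho>) * f (iv \<rho>) \<rho>" by (rule sdelta_c[OF r])
  finally show ?thesis .
qed

lemma claim: assumes L: "graded_left_ideal G S f L" and sub: "L1 L \<subseteq> M" shows "L \<subseteq> Lm M"
proof
  fix a assume a: "a \<in> L"
  have aC: "a \<in> C" using L a by (auto simp: graded_left_ideal_def)
  have "\<forall>\<rho>\<in>G. iv \<rho> (a \<rho>) * f (iv \<rho>) \<rho> \<in> M"
  proof
    fix \<rho> assume r: "\<rho> \<in> G"
    define b where "b = cp_mult G f (embx (iv \<rho>) 1) a"
    have bL: "b \<in> L" using L a emb_C[OF Ginv[OF r] S1] by (simp add: b_def graded_left_ideal_def)
    then have "hcomp b id \<in> L" using L Gid by (simp add: graded_left_ideal_def)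
    then have "embx id (b id) \<in> L" by (simp add: hcomp_emb)
    moreover have "b id \<in> S" using bL L Gid by (auto simp: graded_left_ideal_def cp_carrier_def)
    ultimately have "b id \<in> M" using sub by (auto simp: L1_def)
    then show "iv \<rho> (a \<rho>) * f (iv \<rho>) \<rho> \<in> M" using key_val[OF r] by (simp add: b_def)
  qed
  then show "a \<in> Lm M" using aC by (simp add: Lm_def)
qed

lemma inv_comp_eq:
  assumes s: "\<sigma> \<in> G" and t: "\<tau> \<in> G" and st: "\<sigma> \<circ> \<tau> = \<rho>"
  shows "iv \<rho> \<circ> \<sigma> = iv \<tau>"
proof
  fix x
  have r: "\<rho> \<in> G" using Gcomp[OF s t] st by simp
  have "\<rho> (iv \<tau> x) = \<sigma> x" using st fa_inv_cancel[OF Gaut[OF t]] by auto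
  also have "\<dots> = \<rho> (iv \<rho> (\<sigma> x))" using fa_inv_cancel[OF Gaut[OF r]] by simp
  finally have "\<rho> (iv \<tau> x) = \<rho> (iv \<rho> (\<sigma> x))" .
  then have "iv \<tau> x = iv \<rho> (\<sigma> x)" using fa_bij[OF Gaut[OF r]] by (simp add: bij_is_inj inj_eq)
  then show "(iv \<rho> \<circ> \<sigma>) x = iv \<tau> x" by simp
qed

lemma Lm_graded: assumes M: "ideal_in S M" shows "graded_left_ideal G S f (Lm M)"
  unfolding graded_left_ideal_def
proof (intro conjI ballI)
  show "Lm M \<subseteq> C" by (auto simp: Lm_def)
  show "(\<lambda>_. 0) \<in> Lm M"
    using ideal_0[OF M] S0 by (auto simp: Lm_def cp_carrier_def fa_0[OF Gaut[OF Ginv]])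
  fix a b assume a: "a \<in> Lm M" and b: "b \<in> Lm M"
  have aC: "a \<in> C" and bC: "b \<in> C" using a b by (auto simp: Lm_def)
  show "cp_add a b \<in> Lm M" unfolding Lm_def
  proof (intro CollectI conjI ballI)
    show "cp_add a b \<in> C" using aC bC by (auto simp: cp_carrier_def cp_add_def Sadd)
    fix \<rho> assume r: "\<rho> \<in> G"
    have "iv \<rho> (cp_add a b \<rho>) * f (iv \<rho>) \<rho> = iv \<rho> (a \<rho>) * f (iv \<rho>) \<rho> + iv \<rho> (b \<rho>) * f (iv \<rho>) \<rho>"
      by (simp add: cp_add_def fa_add[OF Gaut[OF Ginv[OF r]]] distrib_right)
    then show "iv \<rho> (cp_add a b \<rho>) * f (iv \<rho>) \<rho> \<in> M"
      using a b r ideal_add[OF M] by (auto simp: Lm_def)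
  qed
  show "(\<lambda>\<rho>. a \<rho> - b \<rho>) \<in> Lm M" unfolding Lm_def
  proof (intro CollectI conjI ballI)
    show "(\<lambda>\<rho>. a \<rho> - b \<rho>) \<in> C" using aC bC by (auto simp: cp_carrier_def Sdiff)
    fix \<rho> assume r: "\<rho> \<in> G"
    have "iv \<rho> (a \<rho> - b \<rho>) * f (iv \<rho>) \<rho> = iv \<rho> (a \<rho>) * f (iv \<rho>) \<rho> - iv \<rho> (b \<rho>) * f (iv \<rho>) \<rho>"
      by (simp add: fa_diff[OF Gaut[OF Ginv[OF r]]] left_diff_distrib)
    then show "iv \<rho> (a \<rho> - b \<rho>) * f (iv \<rho>) \<rho> \<in> M"
      using a b r ideal_diff[OF S M] by (auto simp: Lm_def)
  qed
next
  fix c a assume c: "c \<in> C" and a: "a \<in> Lm M"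
  have aC: "a \<in> C" using a by (auto simp: Lm_def)
  have aM: "\<And>\<tau>. \<tau> \<in> G \<Longrightarrow> iv \<tau> (a \<tau>) * f (iv \<tau>) \<tau> \<in> M" using a by (auto simp: Lm_def)
  show "cp_mult G f c a \<in> Lm M" unfolding Lm_def
  proof (intro CollectI conjI ballI)
    show "cp_mult G f c a \<in> C" by (rule mult_C[OF c aC])
    fix \<rho> assume r: "\<rho> \<in> G"
    have far: "field_aut (iv \<rho>)" using Gaut[OF Ginv[OF r]] .
    have "iv \<rho> (cp_mult G f c a \<rho>) * f (iv \<rho>) \<rho> =
      (\<Sum>\<sigma>\<in>G. \<Sum>\<tau>\<in>G. iv \<rho> (if \<sigma> \<circ> \<tau> = \<rho> then c \<sigma> * \<sigma> (a \<tau>) * f \<sigma> \<tau> else 0) * f (iv \<rho>) \<rho>)"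
      unfolding cp_mult_def by (simp add: fa_sum[OF far] sum_distrib_right)
    also have "\<dots> \<in> M"
    proof (intro ideal_sum[OF M])
      fix \<sigma> \<tau> assume s: "\<sigma> \<in> G" and t: "\<tau> \<in> G"
      show "iv \<rho> (if \<sigma> \<circ> \<tau> = \<rho> then c \<sigma> * \<sigma> (a \<tau>) * f \<sigma> \<tau> else 0) * f (iv \<rho>) \<rho> \<in> M"
      proof (cases "\<sigma> \<circ> \<tau> = \<rho>")
        case False then show ?thesis using fa_0[OF far] ideal_0[OF M] by simp
      next
        case True
        have e1: "iv \<rho> \<circ> \<sigma> = iv \<tau>" by (rule inv_comp_eq[OF s t True])
        have e2: "iv \<rho> (\<sigma> (a \<tau>)) = iv \<tau> (a \<tau>)" using e1 by (metis comp_apply)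
        have cc: "iv \<rho> (f \<sigma> \<tau>) * f (iv \<rho>) \<rho> = f (iv \<rho>) \<sigma> * f (iv \<tau>) \<tau>"
          using cocycle[OF Ginv[OF r] s t] True e1 by simp
        have "iv \<rho> (c \<sigma> * \<sigma> (a \<tau>) * f \<sigma> \<tau>) * f (iv \<rho>) \<rho>
            = iv \<rho> (c \<sigma>) * iv \<tau> (a \<tau>) * (iv \<rho> (f \<sigma> \<tau>) * f (iv \<rho>) \<rho>)"
          by (simp add: fa_mult[OF far] e2 mult.assoc)
        also have "\<dots> = (iv \<rho> (c \<sigma>) * f (iv \<rho>) \<sigma>) * (iv \<tau> (a \<tau>) * f (iv \<tau>) \<tau>)"
          unfolding cc by (simp add: ac_simps)
        also have "\<dots> \<in> M"
        proof (rule ideal_mult[OF M])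
          have "iv \<rho> (c \<sigma>) \<in> S" using GS[OF Ginv[OF r] C_S[OF c s]] .
          moreover have "f (iv \<rho>) \<sigma> \<in> S" using fS[OF Ginv[OF r] s] .
          ultimately show "iv \<rho> (c \<sigma>) * f (iv \<rho>) \<sigma> \<in> S" by (rule Smult)
          show "iv \<tau> (a \<tau>) * f (iv \<tau>) \<tau> \<in> M" by (rule aM[OF t])
        qed
        finally show ?thesis using True by simp
      qed
    qed
    finally show "iv \<rho> (cp_mult G f c a \<rho>) * f (iv \<rho>) \<rho> \<in> M" .
  qed
next
  fix a \<sigma> assume a: "a \<in> Lm M" and s: "\<sigma> \<in> G"
  have aC: "a \<in> C" using a by (auto simp: Lm_def)
  show "hcomp a \<sigma> \<in> Lm M" unfolding Lm_def
  proof (intro CollectI conjI ballI)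
    show "hcomp a \<sigma> \<in> C" using emb_C[OF s C_S[OF aC s]] by (simp add: hcomp_emb)
    fix \<rho> assume r: "\<rho> \<in> G"
    show "iv \<rho> (hcomp a \<sigma> \<rho>) * f (iv \<rho>) \<rho> \<in> M"
      using a r ideal_0[OF M] fa_0[OF Gaut[OF Ginv[OF r]]] by (auto simp: Lm_def hcomp_def)
  qed
qed

lemma Lm_proper: assumes M: "ideal_in S M" and ne: "M \<noteq> S" shows "Lm M \<noteq> C"
proof
  assume "Lm M = C"
  then have "embx id 1 \<in> Lm M" using emb_C[OF Gid S1] by simp
  then have "\<forall>\<rho>\<in>G. iv \<rho> (embx id 1 \<rho>) * f (iv \<rho>) \<rho> \<in> M" by (simp add: Lm_def)
  from bspec[OF this Gid] have "1 \<in> M" by (simp add: inv_id f_id1[OF Gid])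
  then show False using ideal_one[OF M] ne by blast
qed

lemma L1_Lm: assumes M: "ideal_in S M" shows "L1 (Lm M) = M"
proof
  show "L1 (Lm M) \<subseteq> M"
  proof
    fix s assume "s \<in> L1 (Lm M)"
    then have "embx id s \<in> Lm M" by (simp add: L1_def)
    then have "\<forall>\<rho>\<in>G. iv \<rho> (embx id s \<rho>) * f (iv \<rho>) \<rho> \<in> M" by (simp add: Lm_def)
    from bspec[OF this Gid] show "s \<in> M" by (simp add: inv_id f_id1[OF Gid])
  qed
  show "M \<subseteq> L1 (Lm M)"
  proof
    fix s assume s: "s \<in> M"
    then have sS: "s \<in> S" using ideal_sub[OF M] by auto
    have "\<forall>\<rho>\<in>G. iv \<rho> (embx id s \<rho>) * f (iv \<rho>) \<rho> \<in> M"
    proof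
      fix \<rho> assume r: "\<rho> \<in> G"
      show "iv \<rho> (embx id s \<rho>) * f (iv \<rho>) \<rho> \<in> M"
      proof (cases "\<rho> = id")
        case True then show ?thesis using s by (simp add: embx_def inv_id f_id1[OF Gid])
      next
        case False then show ?thesis using fa_0[OF Gaut[OF Ginv[OF r]]] ideal_0[OF M] by (simp add: embx_def)
      qed
    qed
    then show "s \<in> L1 (Lm M)" using sS emb_C[OF Gid sS] by (simp add: L1_def Lm_def)
  qed
qed

lemma L1_mono: "L \<subseteq> L' \<Longrightarrow> L1 L \<subseteq> L1 L'" by (auto simp: L1_def)

lemma Lm_max: assumes M: "maximal_ideal_in S M" shows "maximal_graded_left_ideal G S f (Lm M)"
proof -
  have MI: "ideal_in S M" and MS: "M \<noteq> S"
    and mx: "\<And>J. ideal_in S J \<Longrightarrow> M \<subseteq> J \<Longrightarrow> J \<noteq> S \<Longrightarrow> J = M"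
    using M by (auto simp: maximal_ideal_in_def)
  show ?thesis unfolding maximal_graded_left_ideal_def
  proof (intro conjI allI impI)
    show "graded_left_ideal G S f (Lm M)" by (rule Lm_graded[OF MI])
    show "Lm M \<noteq> C" by (rule Lm_proper[OF MI MS])
    fix L' assume h: "graded_left_ideal G S f L' \<and> Lm M \<subseteq> L' \<and> L' \<noteq> C"
    then have g: "graded_left_ideal G S f L'" and sub: "Lm M \<subseteq> L'" and ne: "L' \<noteq> C" by auto
    have "M \<subseteq> L1 L'" using L1_mono[OF sub] unfolding L1_Lm[OF MI] .
    moreover have "L1 L' \<noteq> S" using L1_proper[OF g ne] S1 by auto
    ultimately have "L1 L' = M" using mx[OF L1_ideal[OF g]] by simp
    then have "L' \<subseteq> Lm M" using claim[OF g] by simp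
    then show "L' = Lm M" using sub by (rule equalityI)
  qed
qed

lemma max_is_Lm: assumes L: "maximal_graded_left_ideal G S f L"
  shows "\<exists>M. maximal_ideal_in S M \<and> L = Lm M"
proof -
  have LG: "graded_left_ideal G S f L" and LC: "L \<noteq> C"
    and mx: "\<And>L'. graded_left_ideal G S f L' \<Longrightarrow> L \<subseteq> L' \<Longrightarrow> L' \<noteq> C \<Longrightarrow> L' = L"
    using L by (auto simp: maximal_graded_left_ideal_def)
  obtain M where M: "maximal_ideal_in S M" "L1 L \<subseteq> M"
    using maximal_exists[OF S L1_ideal[OF LG] L1_proper[OF LG LC]] by blast
  have MI: "ideal_in S M" and MS: "M \<noteq> S" using M by (auto simp: maximal_ideal_in_def)
  have "L \<subseteq> Lm M" by (rule claim[OF LG M(2)])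
  then have "Lm M = L" using mx[OF Lm_graded[OF MI] _ Lm_proper[OF MI MS]] by blast
  then show ?thesis using M by blast
qed

lemma jac_eq: "graded_jacobson G S f = C \<inter> \<Inter>{Lm M | M. maximal_ideal_in S M}"
proof -
  have "{L. maximal_graded_left_ideal G S f L} = {Lm M | M. maximal_ideal_in S M}"
  proof (intro equalityI subsetI)
    fix L assume "L \<in> {L. maximal_graded_left_ideal G S f L}"
    then obtain M where "maximal_ideal_in S M" "L = Lm M" using max_is_Lm by blast
    then show "L \<in> {Lm M | M. maximal_ideal_in S M}" by blast
  next
    fix L assume "L \<in> {Lm M | M. maximal_ideal_in S M}"
    then obtain M where "maximal_ideal_in S M" "L = Lm M" by blast
    then show "L \<in> {L. maximal_graded_left_ideal G S f L}" using Lm_max by simp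
  qed
  then show ?thesis by (simp add: graded_jacobson_def)
qed

lemma image_inv_S: "\<rho> \<in> G \<Longrightarrow> \<forall>x\<in>S. \<rho> x \<in> S" using GS by blast

lemma max_img: "\<rho> \<in> G \<Longrightarrow> maximal_ideal_in S M \<Longrightarrow> maximal_ideal_in S (\<rho> ` M)"
  by (rule maximal_image[OF S Gaut]) (auto intro: GS Ginv)

theorem main: "graded_jacobson G S f = {a \<in> C. \<forall>\<sigma>\<in>G. a \<sigma> \<in> I_sig S f \<sigma>}"
  unfolding jac_eq
proof (intro equalityI subsetI)
  fix a assume "a \<in> C \<inter> \<Inter>{Lm M | M. maximal_ideal_in S M}"
  then have aC: "a \<in> C" and aL: "\<And>M. maximal_ideal_in S M \<Longrightarrow> a \<in> Lm M" by blast+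
  have "\<forall>\<rho>\<in>G. a \<rho> \<in> I_sig S f \<rho>"
  proof
    fix \<rho> assume r: "\<rho> \<in> G"
    have "a \<rho> \<in> N" if N: "maximal_ideal_in S N" and fN: "f \<rho> (iv \<rho>) \<notin> N" for N
    proof -
      have Mm: "maximal_ideal_in S (iv \<rho> ` N)" by (rule max_img[OF Ginv[OF r] N])
      have "iv \<rho> (a \<rho>) * f (iv \<rho>) \<rho> \<in> iv \<rho> ` N" using aL[OF Mm] r by (simp add: Lm_def)
      then obtain n where n: "n \<in> N" "iv \<rho> (a \<rho>) * f (iv \<rho>) \<rho> = iv \<rho> n" by blast
      have "n = \<rho> (iv \<rho> n)" using fa_inv_cancel[OF Gaut[OF r]] by simp
      also have "\<dots> = a \<rho> * f \<rho> (iv \<rho>)"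
        unfolding n(2)[symmetric] by (simp add: fa_mult[OF Gaut[OF r]] fa_inv_cancel[OF Gaut[OF r]] f_inv[OF r])
      finally have "a \<rho> * f \<rho> (iv \<rho>) \<in> N" using n(1) by simp
      then show "a \<rho> \<in> N"
        using maximal_prime[OF S N fS[OF r Ginv[OF r]] C_S[OF aC r]] fN by (simp add: mult.commute)
    qed
    then show "a \<rho> \<in> I_sig S f \<rho>" using C_S[OF aC r] by (auto simp: I_sig_def)
  qed
  then show "a \<in> {a \<in> C. \<forall>\<sigma>\<in>G. a \<sigma> \<in> I_sig S f \<sigma>}" using aC by simp
next
  fix a assume "a \<in> {a \<in> C. \<forall>\<sigma>\<in>G. a \<sigma> \<in> I_sig S f \<sigma>}"
  then have aC: "a \<in> C" and aI: "\<And>\<sigma>. \<sigma> \<in> G \<Longrightarrow> a \<sigma> \<in> I_sig S f \<sigma>" by auto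
  have "a \<in> Lm M" if M: "maximal_ideal_in S M" for M
  proof -
    have MI: "ideal_in S M" using M by (simp add: maximal_ideal_in_def)
    have "\<forall>\<rho>\<in>G. iv \<rho> (a \<rho>) * f (iv \<rho>) \<rho> \<in> M"
    proof
      fix \<rho> assume r: "\<rho> \<in> G"
      have N: "maximal_ideal_in S (\<rho> ` M)" by (rule max_img[OF r M])
      have NI: "ideal_in S (\<rho> ` M)" using N by (simp add: maximal_ideal_in_def)
      have aS: "a \<rho> \<in> S" using C_S[OF aC r] .
      have fS': "f \<rho> (iv \<rho>) \<in> S" using fS[OF r Ginv[OF r]] .
      have "a \<rho> * f \<rho> (iv \<rho>) \<in> \<rho> ` M"
      proof (cases "f \<rho> (iv \<rho>) \<in> \<rho> ` M")
        case True then show ?thesis using ideal_mult[OF NI aS] by blast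
      next
        case False
        then have "a \<rho> \<in> \<rho> ` M" using aI[OF r] N by (auto simp: I_sig_def)
        then show ?thesis using ideal_mult2[OF NI fS'] by blast
      qed
      then obtain m where m: "m \<in> M" "a \<rho> * f \<rho> (iv \<rho>) = \<rho> m" by blast
      have "m = iv \<rho> (\<rho> m)" using fa_cancel_inv[OF Gaut[OF r]] by simp
      also have "\<dots> = iv \<rho> (a \<rho>) * f (iv \<rho>) \<rho>"
        unfolding m(2)[symmetric] by (simp add: fa_mult[OF Gaut[OF Ginv[OF r]]] f_inv'[OF r])
      finally show "iv \<rho> (a \<rho>) * f (iv \<rho>) \<rho> \<in> M" using m(1) by simp
    qed
    then show ?thesis using aC by (simp add: Lm_def)
  qed
  then show "a \<in> C \<inter> \<Inter>{Lm M | M. maximal_ideal_in S M}" using aC by blast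
qed

end




lemma list_sum_conv:
  assumes "distinct xs"
  shows "(\<Sum>b\<in>set xs. g b) = (\<Sum>l<length xs. g (xs ! l))"
proof -
  have "(\<Sum>b\<in>set xs. g b) = sum_list (map g xs)" using sum.distinct_set_conv_list[OF assms] .
  also have "\<dots> = (\<Sum>l = 0..<length xs. map g xs ! l)" by (simp add: sum_list_sum_nth)
  also have "\<dots> = (\<Sum>l<length xs. g (xs ! l))" by (simp add: atLeast0LessThan)
  finally show ?thesis .
qed

lemma all_algebraic:
  assumes F: "subfield F" and fe: "finite_ext F"
  shows "y \<in> integral_closure F"
proof -
  have FR: "subring F" using F by (simp add: subfield_def)
  obtain B where B: "finite B" and span: "\<forall>y. \<exists>c. (\<forall>b\<in>B. c b \<in> F) \<and> y = (\<Sum>b\<in>B. c b * b)"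
    using fe by (auto simp: finite_ext_def)
  obtain c1 where c1: "\<forall>b\<in>B. c1 b \<in> F" "1 = (\<Sum>b\<in>B. c1 b * b)" using span by blast
  have "\<exists>b0\<in>B. b0 \<noteq> 0"
  proof (rule ccontr)
    assume "\<not> (\<exists>b0\<in>B. b0 \<noteq> 0)"
    then have "(\<Sum>b\<in>B. c1 b * b) = 0" by (intro sum.neutral) auto
    then show False using c1 by simp
  qed
  then obtain b0 where b0: "b0 \<in> B" "b0 \<noteq> 0" by blast
  obtain ys where ys: "distinct ys" "set ys = B - {b0}"
    using finite_distinct_list B by (metis finite_Diff)
  define xs where "xs = b0 # ys"
  have xs: "distinct xs" "set xs = B" using ys b0 by (auto simp: xs_def)
  define N where "N = length xs"
  define v where "v l = xs ! l" for l
  have N: "N > 0" by (simp add: N_def xs_def)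
  have v0: "v 0 \<noteq> 0" using b0 by (simp add: v_def xs_def)
  have inmod: "z \<in> modV F N v" for z
  proof -
    obtain c where c: "\<forall>b\<in>B. c b \<in> F" "z = (\<Sum>b\<in>B. c b * b)" using span by blast
    have "z = (\<Sum>l<N. c (xs ! l) * v l)"
      using c(2) list_sum_conv[OF xs(1), of "\<lambda>b. c b * b"] xs(2) by (simp add: N_def v_def)
    moreover have "\<forall>l<N. c (xs ! l) \<in> F" using c(1) xs(2) by (auto simp: N_def)
    ultimately show ?thesis unfolding modV_def by (intro CollectI exI[of _ "\<lambda>l. c (xs ! l)"]) simp
  qed
  show ?thesis by (rule det_trick2[where V=F and N=N and v=v and z=y]) (use FR N v0 inmod in auto)
qed

lemma gal_finite:
  assumes F: "subfield F" and fe: "finite_ext F"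
  shows "finite (gal F)"
proof -
  obtain B where B: "finite B" and span: "\<forall>y. \<exists>c. (\<forall>b\<in>B. c b \<in> F) \<and> y = (\<Sum>b\<in>B. c b * b)"
    using fe by (auto simp: finite_ext_def)
  have "\<forall>b. \<exists>p. lead_coeff p = 1 \<and> (\<forall>i. coeff p i \<in> F) \<and> poly p b = 0"
    using all_algebraic[OF F fe] by (auto simp: integral_closure_def)
  then obtain P where P: "\<And>b. lead_coeff (P b) = 1" "\<And>b i. coeff (P b) i \<in> F" "\<And>b. poly (P b) b = 0"
    by metis
  define R where "R b = {x. poly (P b) x = 0}" for b
  have Rfin: "finite (R b)" for b
  proof -
    have "P b \<noteq> 0" using P(1)[of b] by auto
    then show ?thesis unfolding R_def by (rule poly_roots_finite)
  qed
  have "finite (Pi\<^sub>E B R)" using B Rfin by (intro finite_PiE) auto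
  moreover have "(\<lambda>\<sigma>. restrict \<sigma> B) ` gal F \<subseteq> Pi\<^sub>E B R"
  proof
    fix g assume "g \<in> (\<lambda>\<sigma>. restrict \<sigma> B) ` gal F"
    then obtain \<sigma> where s: "\<sigma> \<in> gal F" "g = restrict \<sigma> B" by blast
    have fa: "field_aut \<sigma>" and fx: "\<forall>x\<in>F. \<sigma> x = x" using s(1) by (auto simp: gal_def)
    have "\<sigma> b \<in> R b" for b
    proof -
      have "\<forall>i. \<sigma> (coeff (P b) i) = coeff (P b) i" using fx P(2) by auto
      then have "\<sigma> (poly (P b) b) = poly (P b) (\<sigma> b)" by (rule fa_poly[OF fa])
      then show ?thesis using P(3)[of b] fa_0[OF fa] by (simp add: R_def)
    qed
    then show "g \<in> Pi\<^sub>E B R" using s(2) by simp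
  qed
  moreover have "inj_on (\<lambda>\<sigma>. restrict \<sigma> B) (gal F)"
  proof (rule inj_onI)
    fix \<sigma> \<tau> assume s: "\<sigma> \<in> gal F" and t: "\<tau> \<in> gal F" and eq: "restrict \<sigma> B = restrict \<tau> B"
    have fs: "field_aut \<sigma>" "\<forall>x\<in>F. \<sigma> x = x" and ft: "field_aut \<tau>" "\<forall>x\<in>F. \<tau> x = x"
      using s t by (auto simp: gal_def)
    have onB: "\<sigma> b = \<tau> b" if "b \<in> B" for b using eq that by (metis restrict_apply')
    show "\<sigma> = \<tau>"
    proof
      fix y
      obtain c where c: "\<forall>b\<in>B. c b \<in> F" "y = (\<Sum>b\<in>B. c b * b)" using span by blast
      have "\<sigma> y = (\<Sum>b\<in>B. c b * \<sigma> b)" using c fs by (simp add: fa_sum fa_mult)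
      also have "\<dots> = (\<Sum>b\<in>B. c b * \<tau> b)" using onB by simp
      also have "\<dots> = \<tau> y" using c ft by (simp add: fa_sum fa_mult)
      finally show "\<sigma> y = \<tau> y" .
    qed
  qed
  ultimately show ?thesis by (meson inj_on_finite)
qed

theorem proposition2p4:
  fixes V F :: "'k::field set"
    and f :: "('k \<Rightarrow> 'k) \<Rightarrow> ('k \<Rightarrow> 'k) \<Rightarrow> 'k"
  assumes "valuation_domain_with_qf V F"
    and "finite_galois F"
    and "normalized_cocycle (gal F) (integral_closure V) f"
  shows "graded_jacobson (gal F) (integral_closure V) f =
         {a \<in> cp_carrier (gal F) (integral_closure V).
            \<forall>\<sigma>\<in>gal F. a \<sigma> \<in> I_sig (integral_closure V) f \<sigma>}"
proof -
  have V: "subring V" and VF: "V \<subseteq> F" using assms(1) by (auto simp: valuation_domain_with_qf_def)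
  have F: "subfield F" and fe: "finite_ext F" using assms(2) by (auto simp: finite_galois_def)
  interpret cpset "gal F" "integral_closure V" f
  proof
    show "subring (integral_closure V)" by (rule subring_S[OF V])
    show "finite (gal F)" by (rule gal_finite[OF F fe])
    show "id \<in> gal F" by (rule gal_id)
    show "\<And>\<sigma>. \<sigma> \<in> gal F \<Longrightarrow> iv \<sigma> \<in> gal F" by (rule gal_inv)
    show "\<And>\<sigma> \<tau>. \<sigma> \<in> gal F \<Longrightarrow> \<tau> \<in> gal F \<Longrightarrow> \<sigma> \<circ> \<tau> \<in> gal F" by (rule gal_comp)
    show "\<And>\<sigma>. \<sigma> \<in> gal F \<Longrightarrow> field_aut \<sigma>" by (simp add: gal_def)
    show "\<And>\<sigma> x. \<sigma> \<in> gal F \<Longrightarrow> x \<in> integral_closure V \<Longrightarrow> \<sigma> x \<in> integral_closure V"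
      using gal_S VF by blast
    show "normalized_cocycle (gal F) (integral_closure V) f" by (rule assms(3))
  qed
  show ?thesis by (rule main)
qed


end
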